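(* Let $u$ be the solution of the Cauchy problem in the context, and assume $m_1=0$ and $m_0\ge\sigma/f_0$. Then $\lim_{t\to+\infty}u(x,t)=1$ for every $x\in[0,1]$. Moreover, for all $x\in[0,1]$ and $t\ge0$, \[ 1\ge u(x,t)\ge1-\frac{1-x}{1+\frac{\sigma(1-x)}{m_0f_0-\sigma}\big(e^{(m_0f_0-\sigma)t}-1\big)}\quad\text{if } m_0>\sigma/f_0, \] \[ 1\ge u(x,t)\ge1-\frac{1-x}{1+\sigma(1-x)t}\quad\text{if } m_0=\sigma/f_0. \]
   Context: Constants: $f_0>0$, $f_1\ge0$ with $\sigma=f_0-f_1>0$; $\lambda_0,\lambda_1\ge0$; $\gamma_0,\gamma_1\in(0,1]$; $m_0=\lambda_0\gamma_0$, $m_1=\lambda_1\gamma_1$. With $\mathcal{J}_0u(x,t)=u(x+\gamma_0(1-x),t)-u(x,t)$ and $\mathcal{J}_1u(x,t)=u(x-\gamma_1x,t)-u(x,t)$, $u$ is the unique (mild) solution, which is $C^\infty$ on $[0,1]\times[0,\infty)$, of \[ \partial_tu+\sigma(1-x)x\,\partial_xu=\lambda_0f_0\mathcal{J}_0u+\lambda_1f_1\mathcal{J}_1u\ (0\le x\le1,\ t>0),\quad u(x,0)=x. \] *)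

theory Defs
  imports "HOL-Analysis.Analysis"
begin

end

theory Submission
  imports Defs "HOL-Analysis.Analysis"
begin


lemma deriv_sign_left:
  fixes f :: "real \<Rightarrow> real"
  assumes d: "(f has_real_derivative d) (at t within {a..t})" and at: "a < t"
    and le: "\<And>s. a \<le> s \<Longrightarrow> s < t \<Longrightarrow> f s \<le> f t"
  shows "d \<ge> 0"
proof -
  have lim: "((\<lambda>y. (f y - f t) / (y - t)) \<longlongrightarrow> d) (at_left t)"
    using d unfolding has_field_derivative_iff at_within_Icc_at_left[OF at] by simp
  show ?thesis
  proof (rule tendsto_lowerbound[OF lim])
    show "\<forall>\<^sub>F y in at_left t. 0 \<le> (f y - f t) / (y - t)"
      using eventually_at_left_real[OF at]
    proof eventually_elim
      fix y assume "y \<in> {a<..<t}"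
      then show "0 \<le> (f y - f t) / (y - t)" using le[of y] by (auto intro!: divide_nonpos_neg)
    qed
  qed (simp add: trivial_limit_at_left_real)
qed

lemma dir_t:
  fixes E Ex Et :: "real \<Rightarrow> real \<Rightarrow> real"
  assumes "((\<lambda>(y,s). E y s) has_derivative (\<lambda>(h,k). Ex x t * h + Et x t * k)) (at (x,t) within ({0..1} \<times> {0..}))"
    and "x \<in> {0..1}"
  shows "((\<lambda>s. E x s) has_real_derivative Et x t) (at t within {0..})"
proof -
  have p: "((\<lambda>s. (x,s)) has_derivative (\<lambda>k. (0,k))) (at t within {0..})"
    by (auto intro!: derivative_eq_intros)
  have "((\<lambda>s. (\<lambda>(y,s). E y s) (x,s)) has_derivative (\<lambda>k. (\<lambda>(h,k). Ex x t * h + Et x t * k) (0,k))) (at t within {0..})"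
    apply (rule has_derivative_in_compose[OF p])
    apply (rule has_derivative_subset[OF assms(1)])
    using assms(2) by auto
  moreover have "(\<lambda>k::real. k * Et x t) = (*) (Et x t)" by (auto simp: fun_eq_iff)
  ultimately show ?thesis by (simp add: has_field_derivative_def)
qed

lemma dir_x:
  fixes E Ex Et :: "real \<Rightarrow> real \<Rightarrow> real"
  assumes "((\<lambda>(y,s). E y s) has_derivative (\<lambda>(h,k). Ex x t * h + Et x t * k)) (at (x,t) within ({0..1} \<times> {0..}))"
    and "t \<ge> 0"
  shows "((\<lambda>y. E y t) has_real_derivative Ex x t) (at x within {0..1})"
proof -
  have p: "((\<lambda>y. (y,t)) has_derivative (\<lambda>h. (h,0))) (at x within {0..1})"
    by (auto intro!: derivative_eq_intros)
  have "((\<lambda>y. (\<lambda>(y,s). E y s) (y,t)) has_derivative (\<lambda>h. (\<lambda>(h,k). Ex x t * h + Et x t * k) (h,0))) (at x within {0..1})"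
    apply (rule has_derivative_in_compose[OF p])
    apply (rule has_derivative_subset[OF assms(1)])
    using assms(2) by auto
  moreover have "(\<lambda>k::real. k * Ex x t) = (*) (Ex x t)" by (auto simp: fun_eq_iff)
  ultimately show ?thesis by (simp add: has_field_derivative_def)
qed

lemma compare_strict:
  fixes E Ex Et :: "real \<Rightarrow> real \<Rightarrow> real" and c K :: real and g :: "real \<Rightarrow> real"
  assumes deriv: "\<And>x t. x \<in> {0..1} \<Longrightarrow> t \<ge> 0 \<Longrightarrow>
      ((\<lambda>(y,s). E y s) has_derivative (\<lambda>(h,k). Ex x t * h + Et x t * k)) (at (x,t) within ({0..1} \<times> {0..}))"
    and c: "c \<ge> 0" and K: "K \<ge> 0" and g: "\<And>x. x \<in> {0..1} \<Longrightarrow> g x \<in> {0..1}"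
    and ineq: "\<And>x t. x \<in> {0..1} \<Longrightarrow> t > 0 \<Longrightarrow> Et x t + c*(1-x)*x*Ex x t < K*(E (g x) t - E x t)"
    and init: "\<And>x. x \<in> {0..1} \<Longrightarrow> E x 0 < 0"
    and x: "x \<in> {0..1}" and t: "t \<ge> 0"
  shows "E x t < 0"
proof (rule ccontr)
  assume nt: "\<not> E x t < 0"
  define S where "S = {0..1::real} \<times> {0..t}"
  define F where "F = (\<lambda>p. E (fst p) (snd p))"
  have Fc: "F = (\<lambda>(y,s). E y s)" unfolding F_def by auto
  have contF: "continuous_on ({0..1} \<times> {0..}) F"
    unfolding Fc continuous_on_eq_continuous_within
  proof
    fix q :: "real \<times> real" assume "q \<in> {0..1} \<times> {0..}"
    then obtain a b where q: "q = (a,b)" "a \<in> {0..1}" "b \<ge> 0" by auto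
    show "continuous (at q within {0..1} \<times> {0..}) (\<lambda>(y,s). E y s)"
      unfolding q(1) by (rule has_derivative_continuous[OF deriv[OF q(2,3)]])
  qed
  have contS: "continuous_on S F"
    using contF unfolding S_def by (rule continuous_on_subset) auto
  define Ks where "Ks = S \<inter> F -` {0..}"
  have "closed Ks" unfolding Ks_def
    by (rule continuous_closed_preimage[OF contS]) (auto simp: S_def intro: closed_Times)
  moreover have "compact S" unfolding S_def by (intro compact_Times compact_Icc)
  ultimately have cK: "compact Ks"
    by (metis Ks_def compact_Int_closed Int_absorb1 inf_le1)
  have xtK: "(x,t) \<in> Ks" using nt x t by (auto simp: Ks_def S_def F_def)
  obtain p where pK: "p \<in> Ks" and pmin: "\<And>q. q \<in> Ks \<Longrightarrow> snd p \<le> snd q"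
    using continuous_attains_inf[OF cK _ continuous_on_snd[OF continuous_on_id]] xtK by blast
  define ts where "ts = snd p"
  have p1: "fst p \<in> {0..1}" "ts \<ge> 0" "ts \<le> t" "E (fst p) ts \<ge> 0"
    using pK by (auto simp: Ks_def S_def F_def ts_def)
  have tspos: "ts > 0"
  proof (rule ccontr)
    assume "\<not> ts > 0" then have "ts = 0" using p1 by auto
    then show False using init[OF p1(1)] p1(4) by auto
  qed
  have contx: "continuous_on {0..1} (\<lambda>y. E y ts)"
  proof -
    have "continuous_on {0..1} (\<lambda>y. F (y, ts))"
      apply (rule continuous_on_compose2[OF contF])
      using p1 by (auto intro!: continuous_intros)
    then show ?thesis by (simp add: F_def)
  qed
  obtain xs where xs: "xs \<in> {0..1}" and xmax: "\<And>y. y \<in> {0..1} \<Longrightarrow> E y ts \<le> E xs ts"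
    using continuous_attains_sup[OF compact_Icc _ contx] by fastforce
  have Exs: "E xs ts \<ge> 0" using xmax[OF p1(1)] p1(4) by auto
  have before: "E xs s < 0" if "0 \<le> s" "s < ts" for s
  proof (rule ccontr)
    assume "\<not> E xs s < 0"
    then have "(xs, s) \<in> Ks" using xs that p1 by (auto simp: Ks_def S_def F_def)
    from pmin[OF this] that show False by (auto simp: ts_def)
  qed
  have dt: "Et xs ts \<ge> 0"
  proof (rule deriv_sign_left[of "\<lambda>s. E xs s" _ ts 0])
    show "((\<lambda>s. E xs s) has_real_derivative Et xs ts) (at ts within {0..ts})"
      by (rule has_field_derivative_subset[OF dir_t[where E=E and Ex=Ex and Et=Et and x=xs and t=ts, OF deriv[OF xs p1(2)] xs]]) (use p1 in auto)
  qed (use tspos before Exs in \<open>auto intro: less_imp_le order.trans\<close>)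
  have dx: "c*(1-xs)*xs*Ex xs ts \<ge> 0"
  proof (cases "xs = 0")
    case True then show ?thesis by simp
  next
    case False
    then have xp: "xs > 0" using xs by auto
    have "Ex xs ts \<ge> 0"
    proof (rule deriv_sign_left[of "\<lambda>y. E y ts" _ xs 0])
      show "((\<lambda>y. E y ts) has_real_derivative Ex xs ts) (at xs within {0..xs})"
        by (rule has_field_derivative_subset[OF dir_x[where E=E and Ex=Ex and Et=Et and x=xs and t=ts, OF deriv[OF xs p1(2)] p1(2)]]) (use xs in auto)
    qed (use xp xs xmax in auto)
    then show ?thesis using c xs by auto
  qed
  have "K*(E (g xs) ts - E xs ts) \<le> 0"
    using K xmax[OF g[OF xs]] by (simp add: mult_nonneg_nonpos)
  with ineq[OF xs tspos] dt dx show False by linarith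
qed


lemma compare:
  fixes E Ex Et :: "real \<Rightarrow> real \<Rightarrow> real" and c K :: real and g :: "real \<Rightarrow> real"
  assumes deriv: "\<And>x t. x \<in> {0..1} \<Longrightarrow> t \<ge> 0 \<Longrightarrow>
      ((\<lambda>(y,s). E y s) has_derivative (\<lambda>(h,k). Ex x t * h + Et x t * k)) (at (x,t) within ({0..1} \<times> {0..}))"
    and c: "c \<ge> 0" and K: "K \<ge> 0" and g: "\<And>x. x \<in> {0..1} \<Longrightarrow> g x \<in> {0..1}"
    and ineq: "\<And>x t. x \<in> {0..1} \<Longrightarrow> t > 0 \<Longrightarrow> Et x t + c*(1-x)*x*Ex x t \<le> K*(E (g x) t - E x t)"
    and init: "\<And>x. x \<in> {0..1} \<Longrightarrow> E x 0 \<le> 0"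
    and x: "x \<in> {0..1}" and t: "t \<ge> 0"
  shows "E x t \<le> 0"
proof (rule ccontr)
  assume "\<not> E x t \<le> 0"
  then have pos: "E x t > 0" by simp
  define \<epsilon> where "\<epsilon> = E x t / (2*(1+t))"
  have ep: "\<epsilon> > 0" using pos t by (simp add: \<epsilon>_def)
  have "E x t - \<epsilon>*(1+t) < 0"
  proof (rule compare_strict[where E="\<lambda>y s. E y s - \<epsilon>*(1+s)" and Ex=Ex and Et="\<lambda>y s. Et y s - \<epsilon>" and c=c and K=K and g=g])
    fix x t :: real assume xt: "x \<in> {0..1}" "t \<ge> 0"
    have "((\<lambda>p. (\<lambda>(y,s). E y s) p - \<epsilon>*(1+snd p)) has_derivative
        (\<lambda>p. (\<lambda>(h,k). Ex x t * h + Et x t * k) p - \<epsilon> * snd p)) (at (x,t) within ({0..1} \<times> {0..}))"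
      by (intro has_derivative_diff deriv[OF xt] has_derivative_mult_right has_derivative_add
          has_derivative_const has_derivative_snd has_derivative_ident) (auto intro!: derivative_eq_intros)
    moreover have "(\<lambda>(y,s). E y s - \<epsilon>*(1+s)) = (\<lambda>p. (\<lambda>(y,s). E y s) p - \<epsilon>*(1+snd p))"
      by (auto simp: fun_eq_iff)
    moreover have "(\<lambda>(h,k). Ex x t * h + (Et x t - \<epsilon>) * k) = (\<lambda>p. (\<lambda>(h,k). Ex x t * h + Et x t * k) p - \<epsilon> * snd p)"
      by (auto simp: fun_eq_iff algebra_simps)
    ultimately show "((\<lambda>(y,s). E y s - \<epsilon>*(1+s)) has_derivative (\<lambda>(h,k). Ex x t * h + (Et x t - \<epsilon>) * k)) (at (x,t) within ({0..1} \<times> {0..}))"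
      by simp
  next
    fix x t :: real assume xt: "x \<in> {0..1}" "t > 0"
    show "Et x t - \<epsilon> + c*(1-x)*x*Ex x t < K*((E (g x) t - \<epsilon>*(1+t)) - (E x t - \<epsilon>*(1+t)))"
      using ineq[OF xt] ep by simp
  next
    fix x :: real assume "x \<in> {0..1}" then show "E x 0 - \<epsilon>*(1+0) < 0" using init ep by force
  qed (use c K g x t in auto)
  moreover have "\<epsilon>*(1+t) = E x t / 2" using t by (simp add: \<epsilon>_def field_simps)
  ultimately show False using pos by simp
qed

lemma alg:
  fixes A B z K \<gamma> :: real
  assumes A: "A > 0" and B: "B \<ge> 0" and z: "z \<ge> 0" and K: "K \<ge> 0" and g: "0 \<le> \<gamma>" "\<gamma> \<le> 1"
  shows "z*A*(K*\<gamma>)/(A+z*B)^2 \<le> K*(z/(A+z*B) - ((1-\<gamma>)*z)/(A+((1-\<gamma>)*z)*B))"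
proof -
  define Q where "Q = A+z*B"
  define Q1 where "Q1 = A+((1-\<gamma>)*z)*B"
  have Q: "Q > 0" using A B z by (simp add: Q_def add_pos_nonneg)
  have Q1: "Q1 > 0" using A B z g by (simp add: Q1_def add_pos_nonneg)
  have "(1-\<gamma>)*z \<le> 1*z" by (rule mult_right_mono) (use g z in auto)
  then have "((1-\<gamma>)*z)*B \<le> z*B" using B by (simp add: mult_right_mono)
  then have QQ: "Q1 \<le> Q" unfolding Q_def Q1_def by simp
  have eq: "z/Q - ((1-\<gamma>)*z)/Q1 = \<gamma>*z*A/(Q*Q1)"
    using Q Q1 by (simp add: field_simps Q_def Q1_def)
  have "z*A*(K*\<gamma>)/Q^2 \<le> z*A*(K*\<gamma>)/(Q*Q1)"
    apply (rule divide_left_mono)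
    using Q Q1 QQ A z K g by (auto simp: power2_eq_square intro!: mult_left_mono mult_nonneg_nonneg)
  also have "\<dots> = K*(\<gamma>*z*A/(Q*Q1))" by simp
  finally show ?thesis using eq unfolding Q_def Q1_def by simp
qed

lemma hd_snd:
  fixes A :: "real \<Rightarrow> real"
  assumes "(A has_real_derivative d) (at (snd q))"
  shows "((\<lambda>p::real\<times>real. A (snd p)) has_derivative (\<lambda>p. d * snd p)) (at q within S)"
  using has_derivative_compose[OF has_derivative_snd[OF has_derivative_ident] assms[unfolded has_field_derivative_def]]
  by simp


lemma lower_bound:
  fixes u ux ut :: "real \<Rightarrow> real \<Rightarrow> real" and A B :: "real \<Rightarrow> real" and \<sigma> K \<gamma> a :: real
  assumes diff: "\<And>x t. x \<in> {0..1} \<Longrightarrow> t \<ge> 0 \<Longrightarrow>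
        ((\<lambda>(y, s). u y s) has_derivative (\<lambda>(h, k). ux x t * h + ut x t * k))
          (at (x, t) within ({0..1} \<times> {0..}))"
    and pde: "\<And>x t. x \<in> {0..1} \<Longrightarrow> t > 0 \<Longrightarrow> ut x t + \<sigma>*(1-x)*x*ux x t = K*(u (x+\<gamma>*(1-x)) t - u x t)"
    and init: "\<And>x. x \<in> {0..1} \<Longrightarrow> u x 0 = x"
    and sig: "\<sigma> \<ge> 0" and K: "K \<ge> 0" and gam: "0 < \<gamma>" "\<gamma> \<le> 1" and aeq: "a + \<sigma> = K*\<gamma>"
    and dA: "\<And>t. (A has_real_derivative a * A t) (at t)"
    and dB: "\<And>t. (B has_real_derivative \<sigma> * A t) (at t)"
    and A0: "A 0 = 1" and B0: "B 0 = 0" and Apos: "\<And>t. t \<ge> 0 \<Longrightarrow> A t > 0"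
    and Bnn: "\<And>t. t \<ge> 0 \<Longrightarrow> B t \<ge> 0"
    and x: "x \<in> {0..1}" and t: "t \<ge> 0"
  shows "1 - (1-x)/(A t + (1-x)*B t) \<le> u x t"
proof -
  define Q where "Q = (\<lambda>y s. A s + (1-y)*B s)"
  have Qpos: "Q y s > 0" if "y \<in> {0..1}" "s \<ge> 0" for y s
    using Apos[OF that(2)] Bnn[OF that(2)] that(1) by (simp add: Q_def add_pos_nonneg)
  have "(\<lambda>y s. 1 - (1-y)/Q y s - u y s) x t \<le> 0"
  proof (rule compare[where E="\<lambda>y s. 1 - (1-y)/Q y s - u y s" and Ex="\<lambda>y s. A s/(Q y s)^2 - ux y s"
        and Et="\<lambda>y s. (1-y)*A s*(a+\<sigma>*(1-y))/(Q y s)^2 - ut y s" and c=\<sigma> and K=K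
        and g="\<lambda>y. y+\<gamma>*(1-y)"])
    fix x t :: real assume xt: "x \<in> {0..1}" "t \<ge> 0"
    let ?S = "{0..1::real} \<times> {0::real..}"
    have hA: "((\<lambda>p. A (snd p)) has_derivative (\<lambda>p. (a * A t) * snd p)) (at (x,t) within ?S)"
      by (rule hd_snd) (simp add: dA)
    have hB: "((\<lambda>p. B (snd p)) has_derivative (\<lambda>p. (\<sigma> * A t) * snd p)) (at (x,t) within ?S)"
      by (rule hd_snd) (simp add: dB)
    have h1: "((\<lambda>p::real\<times>real. 1 - fst p) has_derivative (\<lambda>p. 0 - fst p)) (at (x,t) within ?S)"
      by (intro has_derivative_diff has_derivative_const has_derivative_fst has_derivative_ident)
    have dP: "((\<lambda>p. (1 - fst p)/(A (snd p) + (1 - fst p)*B (snd p))) has_derivative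
       (\<lambda>p. -(A t/(Q x t)^2) * fst p - (1-x)*A t*(a+\<sigma>*(1-x))/(Q x t)^2 * snd p)) (at (x,t) within ?S)"
      apply (rule has_derivative_eq_rhs)
       apply (rule has_derivative_divide'[OF h1 has_derivative_add[OF hA has_derivative_mult[OF h1 hB]]])
      using Qpos[OF xt] apply (simp add: Q_def)
      apply (rule ext)
      subgoal for p
      proof -
        have q: "A t + (1-x)*B t \<noteq> 0" using Qpos[OF xt] by (simp add: Q_def)
        have e: "((0 - fst p)*(A t + (1-x)*B t) - (1-x)*(a*A t* snd p + ((0 - fst p)*B t + (1-x)*(\<sigma>*A t* snd p))))
           = -A t* fst p - (1-x)*A t*(a+\<sigma>*(1-x))* snd p" by (simp add: algebra_simps)
        have "-(A t/(Q x t)^2) * fst p - (1-x)*A t*(a+\<sigma>*(1-x))/(Q x t)^2 * snd p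
           = (-A t* fst p - (1-x)*A t*(a+\<sigma>*(1-x))* snd p) / ((A t + (1-x)*B t)*(A t + (1-x)*B t))"
          by (simp add: Q_def power2_eq_square diff_divide_distrib)
        then show ?thesis unfolding e[symmetric] by simp
      qed
      done
    have "((\<lambda>p. 1 - (1 - fst p)/(A (snd p) + (1 - fst p)*B (snd p)) - (\<lambda>(y,s). u y s) p) has_derivative
       (\<lambda>p. 0 - (-(A t/(Q x t)^2) * fst p - (1-x)*A t*(a+\<sigma>*(1-x))/(Q x t)^2 * snd p)
           - (\<lambda>(h, k). ux x t * h + ut x t * k) p)) (at (x,t) within ?S)"
      by (intro has_derivative_diff has_derivative_const dP diff xt)
    moreover have "(\<lambda>(y,s). (\<lambda>y s. 1 - (1-y)/Q y s - u y s) y s)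
       = (\<lambda>p. 1 - (1 - fst p)/(A (snd p) + (1 - fst p)*B (snd p)) - (\<lambda>(y,s). u y s) p)"
      by (auto simp: fun_eq_iff Q_def)
    moreover have "(\<lambda>(h, k). (\<lambda>y s. A s/(Q y s)^2 - ux y s) x t * h + (\<lambda>y s. (1-y)*A s*(a+\<sigma>*(1-y))/(Q y s)^2 - ut y s) x t * k)
      = (\<lambda>p. 0 - (-(A t/(Q x t)^2) * fst p - (1-x)*A t*(a+\<sigma>*(1-x))/(Q x t)^2 * snd p)
           - (\<lambda>(h, k). ux x t * h + ut x t * k) p)"
      by (auto simp: fun_eq_iff algebra_simps)
    ultimately show "((\<lambda>(y,s). (\<lambda>y s. 1 - (1-y)/Q y s - u y s) y s) has_derivative
      (\<lambda>(h, k). (\<lambda>y s. A s/(Q y s)^2 - ux y s) x t * h + (\<lambda>y s. (1-y)*A s*(a+\<sigma>*(1-y))/(Q y s)^2 - ut y s) x t * k))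
      (at (x,t) within ?S)" by simp
  next
    fix x t :: real assume xt: "x \<in> {0..1}" "t > 0"
    have t0: "t \<ge> 0" using xt by simp
    have gx: "1 - (x+\<gamma>*(1-x)) = (1-\<gamma>)*(1-x)" by (simp add: algebra_simps)
    have al: "(1-x)*A t*(K*\<gamma>)/(A t + (1-x)*B t)^2 \<le> K*((1-x)/(A t + (1-x)*B t) - ((1-\<gamma>)*(1-x))/(A t+((1-\<gamma>)*(1-x))*B t))"
      by (rule alg) (use Apos[OF t0] Bnn[OF t0] xt K gam in auto)
    have num: "(1-x)*A t*(a+\<sigma>*(1-x)) + \<sigma>*(1-x)*x*A t = (1-x)*A t*(K*\<gamma>)"
      unfolding aeq[symmetric] by (simp add: algebra_simps)
    have e1: "(1-x)*A t*(a+\<sigma>*(1-x))/(Q x t)^2 + \<sigma>*(1-x)*x*(A t/(Q x t)^2) = (1-x)*A t*(K*\<gamma>)/(Q x t)^2"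
      unfolding num[symmetric] by (simp add: add_divide_distrib)
    show "(\<lambda>y s. (1-y)*A s*(a+\<sigma>*(1-y))/(Q y s)^2 - ut y s) x t + \<sigma>*(1-x)*x*(\<lambda>y s. A s/(Q y s)^2 - ux y s) x t
       \<le> K*((\<lambda>y s. 1 - (1-y)/Q y s - u y s) ((\<lambda>y. y+\<gamma>*(1-y)) x) t - (\<lambda>y s. 1 - (1-y)/Q y s - u y s) x t)"
      using pde[OF xt] e1 al unfolding Q_def gx by (simp add: algebra_simps)
  next
    fix x :: real assume "x \<in> {0..1}"
    then show "(\<lambda>y s. 1 - (1-y)/Q y s - u y s) x 0 \<le> 0" using init by (simp add: Q_def A0 B0)
  next
    fix x :: real assume x: "x \<in> {0..1}"
    have "\<gamma>*(1-x) \<le> 1*(1-x)" by (rule mult_right_mono) (use x gam in auto)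
    then show "(\<lambda>y. y+\<gamma>*(1-y)) x \<in> {0..1}" using x gam by auto
  qed (use sig K x t in auto)
  then show ?thesis by (simp add: Q_def)
qed


theorem proposition4p9:
  fixes f0 f1 \<sigma> lam0 lam1 \<gamma>0 \<gamma>1 m0 m1 :: real
    and u ux ut :: "real \<Rightarrow> real \<Rightarrow> real"
  assumes f0: "f0 > 0" and f1: "f1 \<ge> 0"
    and sigma: "\<sigma> = f0 - f1" "\<sigma> > 0"
    and lam: "lam0 \<ge> 0" "lam1 \<ge> 0"
    and gam0: "0 < \<gamma>0" "\<gamma>0 \<le> 1" and gam1: "0 < \<gamma>1" "\<gamma>1 \<le> 1"
    and m_def: "m0 = lam0 * \<gamma>0" "m1 = lam1 * \<gamma>1"
    and diff: "\<And>x t. x \<in> {0..1} \<Longrightarrow> t \<ge> 0 \<Longrightarrow>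
        ((\<lambda>(y, s). u y s) has_derivative (\<lambda>(h, k). ux x t * h + ut x t * k))
          (at (x, t) within ({0..1} \<times> {0..}))"
    and cont: "continuous_on ({0..1} \<times> {0..}) (\<lambda>(x, t). ux x t)"
              "continuous_on ({0..1} \<times> {0..}) (\<lambda>(x, t). ut x t)"
    and pde: "\<And>x t. x \<in> {0..1} \<Longrightarrow> t > 0 \<Longrightarrow>
        ut x t + \<sigma> * (1 - x) * x * ux x t =
          lam0 * f0 * (u (x + \<gamma>0 * (1 - x)) t - u x t) + lam1 * f1 * (u (x - \<gamma>1 * x) t - u x t)"
    and init: "\<And>x. x \<in> {0..1} \<Longrightarrow> u x 0 = x"
    and m1_zero: "m1 = 0"
    and m0_ge: "m0 \<ge> \<sigma> / f0"
  shows "(\<forall>x\<in>{0..1}. ((\<lambda>t. u x t) \<longlongrightarrow> 1) at_top)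
    \<and> (m0 > \<sigma> / f0 \<longrightarrow> (\<forall>x\<in>{0..1}. \<forall>t\<ge>0.
          1 \<ge> u x t \<and>
          u x t \<ge> 1 - (1 - x) / (1 + \<sigma> * (1 - x) / (m0 * f0 - \<sigma>) * (exp ((m0 * f0 - \<sigma>) * t) - 1))))
    \<and> (m0 = \<sigma> / f0 \<longrightarrow> (\<forall>x\<in>{0..1}. \<forall>t\<ge>0.
          1 \<ge> u x t \<and> u x t \<ge> 1 - (1 - x) / (1 + \<sigma> * (1 - x) * t)))"
  proof -
  have lam1: "lam1 = 0" using m1_zero m_def(2) gam1(1) by simp
  define K where "K = lam0*f0"
  have K: "K \<ge> 0" using lam f0 by (simp add: K_def)
  define a where "a = m0*f0 - \<sigma>"
  have "\<sigma> \<le> m0*f0" using m0_ge f0 by (simp add: pos_divide_le_eq)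
  then have a: "a \<ge> 0" by (simp add: a_def)
  have aeq: "a + \<sigma> = K*\<gamma>0" by (simp add: a_def K_def m_def)
  have pde': "ut x t + \<sigma>*(1-x)*x*ux x t = K*(u (x+\<gamma>0*(1-x)) t - u x t)"
    if "x \<in> {0..1}" "t > 0" for x t
    using pde[OF that] lam1 by (simp add: K_def)
  have upper: "u x t \<le> 1" if xt: "x \<in> {0..1}" "t \<ge> 0" for x t
  proof -
    have "(\<lambda>y s. u y s - 1) x t \<le> 0"
    proof (rule compare[where E="\<lambda>y s. u y s - 1" and Ex=ux and Et=ut and c=\<sigma> and K=K
          and g="\<lambda>y. y+\<gamma>0*(1-y)"])
      fix x t :: real assume xt: "x \<in> {0..1}" "t \<ge> 0"
      have "((\<lambda>p. (\<lambda>(y,s). u y s) p - 1) has_derivative (\<lambda>p. (\<lambda>(h, k). ux x t * h + ut x t * k) p - 0))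
          (at (x,t) within ({0..1} \<times> {0..}))"
        by (intro has_derivative_diff diff xt has_derivative_const)
      moreover have "(\<lambda>(y,s). (\<lambda>y s. u y s - 1) y s) = (\<lambda>p. (\<lambda>(y,s). u y s) p - 1)"
        by (auto simp: fun_eq_iff)
      ultimately show "((\<lambda>(y,s). (\<lambda>y s. u y s - 1) y s) has_derivative (\<lambda>(h, k). ux x t * h + ut x t * k))
          (at (x,t) within ({0..1} \<times> {0..}))" by simp
    next
      fix x t :: real assume xt: "x \<in> {0..1}" "t > 0"
      show "ut x t + \<sigma>*(1-x)*x*ux x t \<le> K*((\<lambda>y s. u y s - 1) ((\<lambda>y. y+\<gamma>0*(1-y)) x) t - (\<lambda>y s. u y s - 1) x t)"
        using pde'[OF xt] by simp
    next
      fix x :: real assume "x \<in> {0..1}"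
      then show "(\<lambda>y s. u y s - 1) x 0 \<le> 0" using init by simp
    next
      fix x :: real assume x: "x \<in> {0..1}"
      have "\<gamma>0*(1-x) \<le> 1*(1-x)" by (rule mult_right_mono) (use x gam0 in auto)
      then show "(\<lambda>y. y+\<gamma>0*(1-y)) x \<in> {0..1}" using x gam0 by auto
    qed (use sigma K xt in auto)
    then show ?thesis by simp
  qed
  have "\<exists>A B. (\<forall>t. (A has_real_derivative a * A t) (at t)) \<and> (\<forall>t. (B has_real_derivative \<sigma> * A t) (at t))
     \<and> A 0 = 1 \<and> B 0 = 0 \<and> (\<forall>t\<ge>0. A t \<ge> 1) \<and> (\<forall>t\<ge>0. B t \<ge> \<sigma>*t)
     \<and> (a > 0 \<longrightarrow> (\<forall>t. A t = exp (a*t) \<and> B t = \<sigma>*(exp (a*t) - 1)/a))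
     \<and> (a = 0 \<longrightarrow> (\<forall>t. A t = 1 \<and> B t = \<sigma>*t))"
  proof (cases "a > 0")
    case True
    show ?thesis
    proof (rule exI[of _ "\<lambda>t. exp (a*t)"], rule exI[of _ "\<lambda>t. \<sigma>*(exp (a*t) - 1)/a"], intro conjI allI impI)
      fix t :: real
      show "((\<lambda>t. exp (a*t)) has_real_derivative a * exp (a*t)) (at t)"
        by (auto intro!: derivative_eq_intros simp: algebra_simps)
      show "((\<lambda>t. \<sigma>*(exp (a*t) - 1)/a) has_real_derivative \<sigma> * exp (a*t)) (at t)"
        using True by (auto intro!: derivative_eq_intros simp: algebra_simps)
    next
      fix t :: real assume t: "t \<ge> 0"
      show "1 \<le> exp (a*t)" using t a by simp
      have "1 + a*t \<le> exp (a*t)" by (rule exp_ge_add_one_self)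
      then have "\<sigma>*(a*t) \<le> \<sigma>*(exp (a*t) - 1)" using sigma(2) by (intro mult_left_mono) (auto simp: algebra_simps)
      then have "\<sigma>*(a*t)/a \<le> \<sigma>*(exp (a*t) - 1)/a" using True by (intro divide_right_mono) auto
      then show "\<sigma>*t \<le> \<sigma>*(exp (a*t) - 1)/a" using True by simp
    qed (use True in auto)
  next
    case False
    then have a0: "a = 0" using a by simp
    show ?thesis
    proof (rule exI[of _ "\<lambda>t. 1"], rule exI[of _ "\<lambda>t. \<sigma>*t"], intro conjI allI impI)
      fix t :: real
      show "((\<lambda>t. 1) has_real_derivative a * 1) (at t)"
        using a0 by (auto intro!: derivative_eq_intros)
      show "((\<lambda>t. \<sigma>*t) has_real_derivative \<sigma> * 1) (at t)"
        by (auto intro!: derivative_eq_intros)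
    qed (use a0 in auto)
  qed
  then obtain A B where dA: "\<And>t. (A has_real_derivative a * A t) (at t)"
    and dB: "\<And>t. (B has_real_derivative \<sigma> * A t) (at t)"
    and A0: "A 0 = 1" and B0: "B 0 = 0" and A1: "\<And>t. t \<ge> 0 \<Longrightarrow> A t \<ge> 1"
    and Bge: "\<And>t. t \<ge> 0 \<Longrightarrow> B t \<ge> \<sigma>*t"
    and Apos': "a > 0 \<Longrightarrow> A t = exp (a*t) \<and> B t = \<sigma>*(exp (a*t) - 1)/a"
    and Azero: "a = 0 \<Longrightarrow> A t = 1 \<and> B t = \<sigma>*t" for t
    by blast
  have Bnn: "B t \<ge> 0" if "t \<ge> 0" for t
    using Bge[OF that] sigma(2) that by (meson mult_nonneg_nonneg less_imp_le order.trans)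
  have lower: "1 - (1-x)/(A t + (1-x)*B t) \<le> u x t" if xt: "x \<in> {0..1}" "t \<ge> 0" for x t
    by (rule lower_bound[where ux=ux and ut=ut and \<sigma>=\<sigma> and K=K and \<gamma>=\<gamma>0 and a=a])
       (use diff pde' init sigma K gam0 aeq dA dB A0 B0 A1 Bnn xt in \<open>auto intro: less_le_trans[OF zero_less_one]\<close>)
  have lim: "((\<lambda>t. u x t) \<longlongrightarrow> 1) at_top" if x: "x \<in> {0..1}" for x
  proof (rule tendsto_sandwich[of "\<lambda>t. 1 - inverse (\<sigma>*t)" _ _ "\<lambda>t. 1"])
    show "\<forall>\<^sub>F t in at_top. 1 - inverse (\<sigma>*t) \<le> u x t"
      unfolding eventually_at_top_linorder
    proof (intro exI allI impI)
      fix t :: real assume t: "t \<ge> 1"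
      have Ap: "A t > 0" using A1[of t] t by simp
      have Bt: "B t \<ge> \<sigma>*t" using Bge[of t] t by simp
      have st: "\<sigma>*t > 0" using sigma(2) t by simp
      have "(1-x)/(A t + (1-x)*B t) \<le> inverse (\<sigma>*t)"
      proof (cases "x = 1")
        case True then show ?thesis using st by (simp del: inverse_mult_distrib)
      next
        case False
        then have x1: "1 - x > 0" using x by simp
        have "(1-x)*(\<sigma>*t) \<le> (1-x)*B t" using Bt x1 by (simp add: mult_left_mono)
        then have le: "(1-x)*(\<sigma>*t) \<le> A t + (1-x)*B t" using Ap by simp
        have "(1-x)/(A t + (1-x)*B t) \<le> (1-x)/((1-x)*(\<sigma>*t))"
        proof (rule divide_left_mono[OF le])
          have p: "(1-x)*(\<sigma>*t) > 0" using x1 st by simp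
          then show "0 < (A t + (1-x)*B t) * ((1-x)*(\<sigma>*t))" using le by (metis mult_pos_pos order_less_le_trans)
        qed (use x1 in auto)
        also have "\<dots> = inverse (\<sigma>*t)" using x1 by (simp only: divide_divide_eq_left[symmetric] inverse_eq_divide) simp
        finally show ?thesis .
      qed
      then show "1 - inverse (\<sigma>*t) \<le> u x t" using lower[OF x, of t] t by simp
    qed
    show "\<forall>\<^sub>F t in at_top. u x t \<le> 1"
      unfolding eventually_at_top_linorder using upper[OF x] by blast
    have "((\<lambda>t. inverse (\<sigma>*t)) \<longlongrightarrow> 0) at_top"
      by (rule tendsto_inverse_0_at_top[OF filterlim_tendsto_pos_mult_at_top[OF tendsto_const sigma(2) filterlim_ident]])
    then show "((\<lambda>t. 1 - inverse (\<sigma>*t)) \<longlongrightarrow> 1) at_top"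
      using tendsto_diff[OF tendsto_const, of "\<lambda>t. inverse (\<sigma>*t)" 0 at_top 1] by simp
  qed simp
  have c2: "\<forall>x\<in>{0..1}. \<forall>t\<ge>0. 1 \<ge> u x t \<and>
          u x t \<ge> 1 - (1 - x) / (1 + \<sigma> * (1 - x) / (m0 * f0 - \<sigma>) * (exp ((m0 * f0 - \<sigma>) * t) - 1))"
    if gt: "m0 > \<sigma> / f0"
  proof (intro ballI allI impI conjI)
    fix x t :: real assume x: "x \<in> {0..1}" and t: "t \<ge> 0"
    show "u x t \<le> 1" by (rule upper[OF x t])
    have ap: "a > 0" using gt f0 by (simp add: a_def pos_divide_less_eq)
    have AB: "A t = exp (a*t)" "B t = \<sigma>*(exp (a*t) - 1)/a" using Apos'[OF ap] by auto
    have eq: "\<sigma> * (1 - x) / (m0 * f0 - \<sigma>) * (exp ((m0 * f0 - \<sigma>) * t) - 1) = (1-x)*B t"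
      unfolding AB a_def by simp
    have x1: "1 - x \<ge> 0" using x by simp
    have Bt: "B t \<ge> 0" by (rule Bnn[OF t])
    have "(1-x)/(A t + (1-x)*B t) \<le> (1-x)/(1 + (1-x)*B t)"
      by (rule divide_left_mono) (use A1[OF t] x1 Bt in \<open>auto intro!: mult_pos_pos add_pos_nonneg mult_nonneg_nonneg\<close>)
    then show "1 - (1 - x) / (1 + \<sigma> * (1 - x) / (m0 * f0 - \<sigma>) * (exp ((m0 * f0 - \<sigma>) * t) - 1)) \<le> u x t"
      using lower[OF x t] unfolding eq by simp
  qed
  have c3: "\<forall>x\<in>{0..1}. \<forall>t\<ge>0. 1 \<ge> u x t \<and> u x t \<ge> 1 - (1 - x) / (1 + \<sigma> * (1 - x) * t)"
    if eq: "m0 = \<sigma> / f0"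
  proof (intro ballI allI impI conjI)
    fix x t :: real assume x: "x \<in> {0..1}" and t: "t \<ge> 0"
    show "u x t \<le> 1" by (rule upper[OF x t])
    have a0: "a = 0" using eq f0 by (simp add: a_def)
    show "1 - (1 - x) / (1 + \<sigma> * (1 - x) * t) \<le> u x t"
      using lower[OF x t] Azero[OF a0, of t] by (simp add: algebra_simps)
  qed
  show ?thesis using lim c2 c3 by blast
qed

end
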